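(* For every integer $k\ge 12$ with $k\not\equiv 2\pmod 3$, put $p_4=9k^2+17k+17$ and $q_4=9k^2+8k+9$. Then $p_4/q_4=[[2]^k,2+k,9]$, $q_4^{-1}=k^2+2k+2$, $\gcd(p_4,30)=1$, and the type $T=\{(2,1),(3,2),(5,4),(p_4,q_4)\}$ satisfies $K^2(T)=\frac{3k^2+139k+154}{15(9k^2+17k+17)}$ and $0<K^2(T)<3e_{\mathrm{orb}}(T)=\frac1{10}+\frac{3}{p_4}$; however, $Q_{X(2,1)}\oplus Q_{X(3,2)}\oplus Q_{X(5,4)}\oplus Q_{X(p_4,q_4)}$ admits no lattice embedding into $-\mathbb{Z}^{k+10}$.
   Context: $[2]^k$ denotes $k$ consecutive entries equal to $2$ in a Hirzebruch–Jung continued fraction $[a_1,\dots,a_\ell]=a_1-1/(a_2-1/(\cdots-1/a_\ell))$ ($a_i\ge2$). $q_4^{-1}$ is the inverse of $q_4$ mod $p_4$ in $(0,p_4)$. For coprime $p>q>0$ with $p/q=[a_1,\dots,a_\ell]$, $Q_{X(p,q)}$ is $\mathbb{Z}^\ell$ with basis $v_1,\dots,v_\ell$, $v_i\cdot v_i=-a_i$, $v_i\cdot v_{i+1}=1$, other products $0$. $-\mathbb{Z}^N$ is $\mathbb{Z}^N$ with $e_i\cdot e_j=-\delta_{ij}$; lattice embeddings are injective form-preserving $\mathbb{Z}$-linear maps. For a type $T=\{(p_i,q_i)\}_{i=1}^4$ write $p_i/(p_i-q_i)=[n_{i,1},\dots,n_{i,\ell_i}]$, $L=\sum\ell_i$;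 $K^2(T)=9-3L+\sum_{i,j}n_{i,j}-\sum_i\frac{q_i+q_i^{-1}-2}{p_i}$, $e_{\mathrm{orb}}(T)=3-\sum_i(1-1/p_i)$. *)

theory Defs
  imports "HOL-Number_Theory.Number_Theory"
begin

fun hj_val :: "int list \<Rightarrow> rat" where
  "hj_val [] = 0"
| "hj_val [a] = of_int a"
| "hj_val (a # as) = of_int a - 1 / hj_val as"

definition hj_cf :: "int \<Rightarrow> int \<Rightarrow> int list" where
  "hj_cf p q = (THE xs. xs \<noteq> [] \<and> (\<forall>a\<in>set xs. a \<ge> 2) \<and> hj_val xs = of_int p / of_int q)"

definition inv_mod :: "int \<Rightarrow> int \<Rightarrow> int" where
  "inv_mod p q = (THE x. 0 < x \<and> x < p \<and> [q * x = 1] (mod p))"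

definition K2 :: "(int \<times> int) list \<Rightarrow> real" where
  "K2 T = 9 - 3 * (\<Sum>(p,q)\<leftarrow>T. real (length (hj_cf p (p - q))))
           + (\<Sum>(p,q)\<leftarrow>T. of_int (sum_list (hj_cf p (p - q))))
           - (\<Sum>(p,q)\<leftarrow>T. (of_int q + of_int (inv_mod p q) - 2) / of_int p)"

definition e_orb :: "(int \<times> int) list \<Rightarrow> real" where
  "e_orb T = 3 - (\<Sum>(p,q)\<leftarrow>T. 1 - 1 / of_int p)"

text \<open>Integral lattices: Z^n with a symmetric bilinear form given by its Gram matrix
  on the standard basis (entries indexed by i,j < n).\<close>
type_synonym lattice = "nat \<times> (nat \<Rightarrow> nat \<Rightarrow> int)"

definition QX :: "int \<Rightarrow> int \<Rightarrow> lattice" where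
  "QX p q = (let as = hj_cf p q in
     (length as, \<lambda>i j. if i = j then - (as ! i)
                      else if i + 1 = j \<or> j + 1 = i then 1 else 0))"

definition orth_sum :: "lattice \<Rightarrow> lattice \<Rightarrow> lattice" (infixl "\<oplus>\<^sub>L" 65) where
  "orth_sum L1 L2 = (case L1 of (n1, G1) \<Rightarrow> case L2 of (n2, G2) \<Rightarrow>
     (n1 + n2, \<lambda>i j. if i < n1 \<and> j < n1 then G1 i j
                     else if n1 \<le> i \<and> n1 \<le> j then G2 (i - n1) (j - n1) else 0))"

definition neg_std :: "nat \<Rightarrow> lattice" where
  "neg_std N = (N, \<lambda>i j. if i = j then -1 else 0)"

text \<open>A lattice embedding: a Z-linear map, determined by the images E i of the basis
  vectors v_i (E i t = t-th coordinate), which preserves the form and is injective.\<close>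
definition lattice_embeds :: "lattice \<Rightarrow> lattice \<Rightarrow> bool" where
  "lattice_embeds L M = (case L of (m, G) \<Rightarrow> case M of (N, H) \<Rightarrow>
     (\<exists>E :: nat \<Rightarrow> nat \<Rightarrow> int.
        (\<forall>i<m. \<forall>j<m. (\<Sum>s<N. \<Sum>t<N. E i s * H s t * E j t) = G i j) \<and>
        (\<forall>c :: nat \<Rightarrow> int. (\<forall>t<N. (\<Sum>i<m. c i * E i t) = 0) \<longrightarrow> (\<forall>i<m. c i = 0))))"

end

theory Submission
  imports Defs
begin


definition valid :: "int list \<Rightarrow> bool" where
  "valid xs = (xs \<noteq> [] \<and> (\<forall>a\<in>set xs. a \<ge> 2))"

lemma hj_val_Cons: "as \<noteq> [] \<Longrightarrow> hj_val (a # as) = of_int a - 1 / hj_val as"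
  by (cases as) auto

lemma hj_val_gt1: "valid xs \<Longrightarrow> hj_val xs > 1"
proof (induction xs)
  case Nil then show ?case by (simp add: valid_def)
next
  case (Cons a as)
  show ?case
  proof (cases "as = []")
    case True then show ?thesis using Cons.prems by (simp add: valid_def)
  next
    case False
    then have v: "hj_val as > 1" using Cons by (simp add: valid_def)
    have "1 / hj_val as < 1" using v by simp
    moreover have "of_int a \<ge> (2::rat)" using Cons.prems by (simp add: valid_def)
    ultimately show ?thesis using False by (simp add: hj_val_Cons)
  qed
qed

lemma hj_val_bounds: "valid (a # as) \<Longrightarrow> as \<noteq> [] \<Longrightarrow>
   of_int a - 1 < hj_val (a # as) \<and> hj_val (a # as) < of_int a"
proof -
  assume va: "valid (a # as)" and ne: "as \<noteq> []"
  then have "valid as" by (simp add: valid_def)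
  then have v: "hj_val as > 1" by (rule hj_val_gt1)
  have "1 / hj_val as < 1" "1 / hj_val as > 0" using v by auto
  then show ?thesis using ne by (simp add: hj_val_Cons)
qed

lemma hj_unique: "valid xs \<Longrightarrow> valid ys \<Longrightarrow> hj_val xs = hj_val ys \<Longrightarrow> xs = ys"
proof (induction xs arbitrary: ys)
  case Nil then show ?case by (simp add: valid_def)
next
  case (Cons a as)
  obtain b bs where ys: "ys = b # bs" using Cons.prems by (cases ys) (auto simp: valid_def)
  show ?case
  proof (cases "as = []")
    case True
    show ?thesis
    proof (cases "bs = []")
      case True then show ?thesis using \<open>as = []\<close> Cons.prems ys by simp
    next
      case False
      have "of_int b - 1 < hj_val ys \<and> hj_val ys < of_int b"
        using hj_val_bounds[of b bs] Cons.prems ys False by simp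
      then have "of_int b - 1 < (of_int a::rat) \<and> (of_int a::rat) < of_int b"
        using Cons.prems True by simp
      then have "b - 1 < a \<and> a < b" by linarith
      then show ?thesis by linarith
    qed
  next
    case False
    have A: "of_int a - 1 < hj_val (a#as) \<and> hj_val (a#as) < of_int a"
      using hj_val_bounds[of a as] Cons.prems False by simp
    show ?thesis
    proof (cases "bs = []")
      case True
      then have "of_int a - 1 < (of_int b::rat) \<and> (of_int b::rat) < of_int a"
        using A Cons.prems ys by simp
      then have "a - 1 < b \<and> b < a" by linarith
      then show ?thesis by linarith
    next
      case F2: False
      have B: "of_int b - 1 < hj_val ys \<and> hj_val ys < of_int b"
        using hj_val_bounds[of b bs] Cons.prems ys F2 by simp
      have "of_int b - 1 < (of_int a::rat)" "(of_int a::rat) - 1 < of_int b"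
        using A B Cons.prems by auto
      then have "b - 1 < a" "a - 1 < b" by linarith+
      then have ab: "a = b" by simp
      have "hj_val as = hj_val bs"
        using Cons.prems ys ab False F2 by (simp add: hj_val_Cons)
      moreover have "valid as" "valid bs" using Cons.prems ys False F2 by (auto simp: valid_def)
      ultimately have "as = bs" using Cons.IH by blast
      then show ?thesis using ys ab by simp
    qed
  qed
qed

lemma hj_cf_eq: assumes v: "valid xs" and h: "hj_val xs = of_int p / of_int q" shows "hj_cf p q = xs"
  unfolding hj_cf_def
proof (rule the_equality)
  show "xs \<noteq> [] \<and> (\<forall>a\<in>set xs. 2 \<le> a) \<and> hj_val xs = of_int p / of_int q"
    using v h by (simp add: valid_def)
  fix ys assume "ys \<noteq> [] \<and> (\<forall>a\<in>set ys. 2 \<le> a) \<and> hj_val ys = of_int p / of_int q"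
  then have "valid ys" "hj_val ys = hj_val xs" using h by (auto simp: valid_def)
  then show "ys = xs" using hj_unique v by blast
qed

lemma hj_rep: "rest \<noteq> [] \<Longrightarrow> hj_val rest = x \<Longrightarrow> x \<ge> 1 \<Longrightarrow>
  hj_val (replicate n 2 @ rest) = (of_nat (n+1) * x - of_nat n) / (of_nat n * x - of_nat n + 1)"
proof (induction n)
  case 0 then show ?case by simp
next
  case (Suc n)
  have m: "of_nat n * 1 \<le> of_nat n * x" using Suc.prems by (intro mult_left_mono) auto
  have p1: "of_nat n * x - of_nat n + 1 \<ge> 1" using m by simp
  have p2: "of_nat (n+1) * x - of_nat n \<ge> 1" using m Suc.prems by (simp add: algebra_simps)
  have "hj_val (replicate (Suc n) 2 @ rest) = 2 - 1 / hj_val (replicate n 2 @ rest)"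
    using Suc.prems by (simp add: hj_val_Cons)
  also have "\<dots> = 2 - 1 / ((of_nat (n+1) * x - of_nat n) / (of_nat n * x - of_nat n + 1))"
    using Suc by simp
  also have "\<dots> = (of_nat (Suc n+1) * x - of_nat (Suc n)) / (of_nat (Suc n) * x - of_nat (Suc n) + 1)"
  proof -
    define A where "A = of_nat (n+1) * x - of_nat n"
    define B where "B = of_nat n * x - of_nat n + 1"
    have "A \<noteq> 0" "B \<noteq> 0" using p1 p2 by (auto simp: A_def B_def)
    then have "2 - 1 / (A / B) = (2 * A - B) / A" by (simp add: field_simps)
    moreover have "2 * A - B = of_nat (Suc n+1) * x - of_nat (Suc n)" by (simp add: A_def B_def algebra_simps)
    moreover have "A = of_nat (Suc n) * x - of_nat (Suc n) + 1" by (simp add: A_def algebra_simps)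
    ultimately show ?thesis by (simp add: A_def B_def)
  qed
  finally show ?case .
qed



lemma cf_small: "hj_cf 2 1 = [2]" "hj_cf 3 2 = [2,2]" "hj_cf 5 4 = [2,2,2,2]"
  "hj_cf 3 1 = [3]" "hj_cf 5 1 = [5]"
  by (rule hj_cf_eq; simp add: valid_def)+

lemma val_main: "K \<ge> 1 \<Longrightarrow> hj_val (replicate K 2 @ [2 + int K, 9]) =
   of_int (9 * (int K)^2 + 17 * int K + 17) / of_int (9 * (int K)^2 + 8 * int K + 9)"
proof -
  assume K: "K \<ge> 1"
  have x: "hj_val [2 + int K, 9] = (9 * of_nat K + 17) / 9" by (simp add: field_simps)
  have "hj_val (replicate K 2 @ [2 + int K, 9]) =
     (of_nat (K+1) * ((9 * of_nat K + 17) / 9) - of_nat K) / (of_nat K * ((9 * of_nat K + 17) / 9) - of_nat K + 1)"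
    by (rule hj_rep) (auto simp: x)
  also have "\<dots> = (9 * (of_nat K * ((9 * of_nat K + 17))) + 9 * (9 * of_nat K + 17) - 81 * of_nat K) / (9 * (of_nat K * (9 * of_nat K + 17)) - 81 * of_nat K + 81)"
    by (simp add: field_simps)
  also have "\<dots> = (9 * (9 * (of_nat K)^2 + 17 * of_nat K + 17)) / (9 * (9 * (of_nat K)^2 + 8 * of_nat K + 9))"
    by (simp add: algebra_simps power2_eq_square)
  also have "\<dots> = of_int (9 * (int K)^2 + 17 * int K + 17) / of_int (9 * (int K)^2 + 8 * int K + 9)"
    by (subst mult_divide_mult_cancel_left) auto
  finally show ?thesis .
qed

lemma cf_main: "K \<ge> 1 \<Longrightarrow> hj_cf (9 * (int K)^2 + 17 * int K + 17) (9 * (int K)^2 + 8 * int K + 9)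
   = replicate K 2 @ [2 + int K, 9]"
  by (rule hj_cf_eq) (auto simp: valid_def val_main)

definition dual :: "nat \<Rightarrow> int list" where
  "dual K = (2 + int K) # replicate (K - 1) 2 @ [3,2,2,2,2,2,2,2]"

lemma val_dual: "K \<ge> 1 \<Longrightarrow> hj_val (dual K) =
   of_int (9 * (int K)^2 + 17 * int K + 17) / of_int (9 * int K + 8)"
proof -
  assume K: "K \<ge> 1"
  have x: "hj_val [3,2,2,2,2,2,2,2] = 17/8" by simp
  have r: "hj_val (replicate (K-1) 2 @ [3,2,2,2,2,2,2,2]) =
     (of_nat (K-1+1) * (17/8) - of_nat (K-1)) / (of_nat (K-1) * (17/8) - of_nat (K-1) + 1)"
    by (rule hj_rep) (auto simp: x)
  have r2: "hj_val (replicate (K-1) 2 @ [3,2,2,2,2,2,2,2]) = (9 * of_nat K + 8) / (9 * of_nat K - 1)"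
    unfolding r using K by (simp add: of_nat_diff field_simps)
  have d: "(9 * of_nat K - 1 :: rat) \<noteq> 0" "(9 * of_nat K + 8 :: rat) \<noteq> 0" using K by auto
  have "hj_val (dual K) = (2 + of_nat K) - 1 / hj_val (replicate (K-1) 2 @ [3,2,2,2,2,2,2,2])"
    unfolding dual_def by (subst hj_val_Cons) auto
  also have "\<dots> = (2 + of_nat K) - (9 * of_nat K - 1) / (9 * of_nat K + 8)" unfolding r2 by simp
  also have "\<dots> = ((2 + of_nat K) * (9 * of_nat K + 8) - (9 * of_nat K - 1)) / (9 * of_nat K + 8)"
    using d by (simp add: field_simps)
  also have "\<dots> = of_int (9 * (int K)^2 + 17 * int K + 17) / of_int (9 * int K + 8)"
    by (simp add: algebra_simps power2_eq_square)
  finally show ?thesis .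
qed

lemma cf_dual: "K \<ge> 1 \<Longrightarrow> hj_cf (9 * (int K)^2 + 17 * int K + 17) (9 * int K + 8) = dual K"
  apply (rule hj_cf_eq)
   apply (auto simp: valid_def dual_def)[1]
  by (rule val_dual)

lemma dual_len: "K \<ge> 1 \<Longrightarrow> length (dual K) = K + 8" by (simp add: dual_def)
lemma dual_sum: "K \<ge> 1 \<Longrightarrow> sum_list (dual K) = 3 * int K + 17" by (simp add: dual_def of_nat_diff sum_list_replicate)

lemma inv_mod_eq: "0 < x \<Longrightarrow> x < p \<Longrightarrow> [q * x = 1] (mod p) \<Longrightarrow> inv_mod p q = x"
  unfolding inv_mod_def
proof (rule the_equality)
  fix y assume y: "0 < y \<and> y < p \<and> [q * y = 1] (mod p)" and x: "0 < x" "x < p" "[q * x = 1] (mod p)"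
  have "[x * (q * y) = x * 1] (mod p)" using y cong_scalar_left by blast
  moreover have "[y * (q * x) = y * 1] (mod p)" using x cong_scalar_left by blast
  ultimately have "[y = x] (mod p)" by (metis cong_sym cong_trans mult.commute mult.left_commute mult_1_right)
  then show "y = x" using x y by (meson cong_less_imp_eq_int less_imp_le)
qed auto

lemma inv_small: "inv_mod 2 1 = 1" "inv_mod 3 2 = 2" "inv_mod 5 4 = 4"
  by (rule inv_mod_eq; simp add: cong_def)+

lemma inv_main: "inv_mod (9 * k^2 + 17 * k + 17) (9 * k^2 + 8 * k + 9) = k^2 + 2 * k + 2" if "k \<ge> (1::int)"
proof (rule inv_mod_eq)
  show "0 < k^2 + 2*k+2" using that by (simp add: add_pos_nonneg)
  have "0 \<le> k * k" using that by simp
  then show "k^2 + 2*k+2 < 9 * k^2 + 17 * k + 17" using that unfolding power2_eq_square by linarith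
  have "(9 * k^2 + 8 * k + 9) * (k^2 + 2 * k + 2) = 1 + (9 * k^2 + 17 * k + 17) * (k^2+k+1)"
    by (simp add: algebra_simps power2_eq_square power3_eq_cube power4_eq_xxxx)
  then show "[(9 * k^2 + 8 * k + 9) * (k^2 + 2 * k + 2) = 1] (mod 9 * k^2 + 17 * k + 17)"
    by (simp add: cong_def)
qed



lemma gcd30: fixes k :: int assumes "k mod 3 \<noteq> 2" shows "gcd (9 * k^2 + 17 * k + 17) 30 = 1"
proof -
  define p where "p = 9 * k^2 + 17 * k + 17"
  have c: "[p = 9 * (k mod m)^2 + 17 * (k mod m) + 17] (mod m)" for m
    unfolding p_def by (intro cong_add cong_mult cong_pow cong_refl) (simp_all add: cong_sym)
  have r2: "k mod 2 = 0 \<or> k mod 2 = 1" by presburger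
  have r3: "k mod 3 = 0 \<or> k mod 3 = 1" using assms by presburger
  have r5: "k mod 5 = 0 \<or> k mod 5 = 1 \<or> k mod 5 = 2 \<or> k mod 5 = 3 \<or> k mod 5 = 4" by presburger
  have "\<not> 2 dvd p" using c[of 2] r2 unfolding cong_def dvd_eq_mod_eq_0 by (elim disjE) simp_all
  moreover have "\<not> 3 dvd p" using c[of 3] r3 unfolding cong_def dvd_eq_mod_eq_0 by (elim disjE) simp_all
  moreover have "\<not> 5 dvd p" using c[of 5] r5 unfolding cong_def dvd_eq_mod_eq_0 by (elim disjE) simp_all
  moreover have "prime (2::int)" "prime (3::int)" "prime (5::int)" by simp_all
  ultimately have "coprime 2 p" "coprime 3 p" "coprime 5 p"
    by (auto intro!: prime_imp_coprime)
  then have "coprime p 2" "coprime p 3" "coprime p 5" by (auto simp: coprime_commute)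
  then have "coprime p (2*3*5)" by (simp only: coprime_mult_right_iff)
  then show ?thesis unfolding p_def by simp
qed



lemma K2_main:
  fixes K :: nat and k p q :: int
  assumes K: "K \<ge> 1" and k: "k = int K" and p: "p = 9 * k^2 + 17 * k + 17" and q: "q = 9 * k^2 + 8 * k + 9"
  shows "K2 [(2, 1), (3, 2), (5, 4), (p, q)] = (3 * k^2 + 139 * k + 154) / (15 * (9 * k^2 + 17 * k + 17))"
proof -
  have pq: "p - q = 9 * int K + 8" using p q k by simp
  have cf: "hj_cf p (p - q) = dual K" unfolding pq using cf_dual[OF K] p k by simp
  have iv: "inv_mod p q = k^2 + 2*k + 2" using inv_main[of k] K k p q by simp
  have "(0::int) \<le> (int K)^2" "0 \<le> int K" by simp_all
  then have "p > 0" unfolding p k by linarith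
  then have pr: "real_of_int p > 0" by simp
  have "K2 [(2, 1), (3, 2), (5, 4), (p, q)] = 9 - 3 * (3 + real (K + 8)) + (10 + of_int (3 * int K + 17))
     - (2/3 + 6/5 + (of_int q + of_int (k^2 + 2*k + 2) - 2) / of_int p)"
    unfolding K2_def using K by (simp add: cf cf_small inv_small iv dual_len dual_sum)
  also have "\<dots> = 17/15 - (10 * of_int k^2 + 10 * of_int k + 9) / of_int p"
  proof -
    have num: "of_int q + of_int (k^2+2*k+2) - 2 = (10 * of_int k^2 + 10*of_int k + 9 :: real)"
      using q by simp
    have "(9::real) - 3 * (3 + real (K + 8)) + (10 + of_int (3 * int K + 17)) = 3" by simp
    then show ?thesis unfolding num by simp
  qed
  also have "\<dots> = (17 * of_int p - 15 * (10 * of_int k^2 + 10 * of_int k + 9)) / (15 * of_int p)"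
    using pr by (simp add: field_simps)
  also have "\<dots> = (3 * k^2 + 139 * k + 154) / (15 * (9 * k^2 + 17 * k + 17))"
    unfolding p by (simp add: algebra_simps)
  finally show ?thesis .
qed

lemma e_orb_main:
  fixes p q :: int assumes "p > 0"
  shows "3 * e_orb [(2, 1), (3, 2), (5, 4), (p, q)] = 1/10 + 3 / of_int p"
  using assms unfolding e_orb_def by (simp add: field_simps)

lemma ineq_main:
  fixes k :: int assumes "k \<ge> 12"
  shows "0 < (3 * k^2 + 139 * k + 154) / (15 * (9 * k^2 + 17 * k + 17))
    \<and> (3 * k^2 + 139 * k + 154) / (15 * (9 * k^2 + 17 * k + 17)) < 1/10 + 3 / (real_of_int (9 * k^2 + 17 * k + 17))"
proof -
  define x where "x = real_of_int k"
  have x: "x \<ge> 12" using assms by (simp add: x_def)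
  have xx: "x * x \<ge> 12 * x" using x by (simp add: mult_right_mono)
  have P: "9 * x^2 + 17 * x + 17 > 0" using x by (simp add: add_pos_nonneg)
  have "0 < (3 * x^2 + 139 * x + 154) / (15 * (9 * x^2 + 17 * x + 17))"
    using x P by (simp add: add_pos_nonneg)
  moreover have "(3 * x^2 + 139 * x + 154) / (15 * (9 * x^2 + 17 * x + 17)) < 1/10 + 3 / (9 * x^2 + 17 * x + 17)"
  proof -
    define Q where "Q = 9 * x^2 + 17 * x + 17"
    have Q: "Q > 0" using P by (simp add: Q_def)
    have e1: "(3 * x^2 + 139 * x + 154) / (15 * Q) = (2 * (3 * x^2 + 139 * x + 154)) / (2 * (15 * Q))"
      by (rule mult_divide_mult_cancel_left[symmetric]) simp
    have e2: "1/10 + 3 / Q = (3 * (Q + 30)) / (2 * (15 * Q))" using Q by (simp add: field_simps)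
    have "2 * (3 * x^2 + 139 * x + 154) < 3 * (Q + 30)" using xx x unfolding Q_def power2_eq_square by (simp only: ring_distribs)
    then have "(2 * (3 * x^2 + 139 * x + 154)) / (2 * (15 * Q)) < (3 * (Q + 30)) / (2 * (15 * Q))"
      using Q by (intro divide_strict_right_mono) auto
    then show ?thesis unfolding Q_def[symmetric] e1 e2 .
  qed
  ultimately show ?thesis by (simp add: x_def)
qed



definition ip :: "nat \<Rightarrow> (nat \<Rightarrow> int) \<Rightarrow> (nat \<Rightarrow> int) \<Rightarrow> int" where
  "ip N x y = (\<Sum>s<N. x s * y s)"
definition supp :: "nat \<Rightarrow> (nat \<Rightarrow> int) \<Rightarrow> nat set" where
  "supp N x = {t. t < N \<and> x t \<noteq> 0}"

lemma supp_sub: "supp N x \<subseteq> {..<N}" by (auto simp: supp_def)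
lemma supp_fin[simp]: "finite (supp N x)" using supp_sub finite_subset by blast
lemma ip_sym: "ip N x y = ip N y x" by (simp add: ip_def mult.commute)

lemma ip_supp: "ip N x y = (\<Sum>t\<in>supp N x \<inter> supp N y. x t * y t)"
  unfolding ip_def by (rule sum.mono_neutral_right) (auto simp: supp_def)

lemma root_unit: assumes "ip N x x = 2" "t \<in> supp N x" shows "x t = 1 \<or> x t = -1"
proof -
  have t: "t < N" "x t \<noteq> 0" using assms(2) by (auto simp: supp_def)
  have "x t * x t \<le> (\<Sum>s<N. x s * x s)"
    by (rule member_le_sum) (use t in auto)
  then have le: "x t * x t \<le> 2" using assms(1) by (simp add: ip_def)
  show ?thesis
  proof (rule ccontr)
    assume "\<not> ?thesis"
    then have "\<bar>x t\<bar> \<ge> 2" using t by auto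
    then have "\<bar>x t\<bar> * \<bar>x t\<bar> \<ge> 2 * 2" by (intro mult_mono) auto
    then show False using le by (simp add: abs_mult_self_eq)
  qed
qed

lemma root_card: assumes "ip N x x = 2" shows "card (supp N x) = 2"
proof -
  have "ip N x x = (\<Sum>t\<in>supp N x. x t * x t)" by (simp add: ip_supp)
  also have "\<dots> = (\<Sum>t\<in>supp N x. 1)"
  proof (rule sum.cong)
    fix t assume "t \<in> supp N x"
    then have "x t = 1 \<or> x t = -1" using root_unit[OF assms] by blast
    then show "x t * x t = 1" by auto
  qed simp
  finally show ?thesis using assms by simp
qed

lemma ip_cases:
  assumes rx: "ip N x x = 2" and ry: "ip N y y = 2"
  shows "(card (supp N x \<inter> supp N y) = 0 \<and> ip N x y = 0)
       \<or> (card (supp N x \<inter> supp N y) = 1 \<and> (ip N x y = 1 \<or> ip N x y = -1))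
       \<or> (card (supp N x \<inter> supp N y) = 2 \<and> (ip N x y = 2 \<or> ip N x y = 0 \<or> ip N x y = -2))"
proof -
  let ?I = "supp N x \<inter> supp N y"
  have "card ?I \<le> card (supp N x)" by (rule card_mono) auto
  then have c: "card ?I \<le> 2" using root_card[OF rx] by simp
  have u: "\<And>t. t \<in> ?I \<Longrightarrow> (x t = 1 \<or> x t = -1) \<and> (y t = 1 \<or> y t = -1)"
    using root_unit[OF rx] root_unit[OF ry] by blast
  consider "card ?I = 0" | "card ?I = 1" | "card ?I = 2" using c by linarith
  then show ?thesis
  proof cases
    case 1
    then have "?I = {}" by simp
    then show ?thesis using 1 by (simp add: ip_supp)
  next
    case 2
    then obtain a where a: "?I = {a}" by (auto simp: card_1_singleton_iff)
    then have "ip N x y = x a * y a" by (simp add: ip_supp)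
    moreover have "(x a = 1 \<or> x a = -1) \<and> (y a = 1 \<or> y a = -1)" using u a by blast
    ultimately show ?thesis using 2 by auto
  next
    case 3
    then obtain a b where ab: "?I = {a, b}" "a \<noteq> b" by (auto simp: card_2_iff)
    then have "ip N x y = x a * y a + x b * y b" by (simp add: ip_supp)
    moreover have "(x a = 1 \<or> x a = -1) \<and> (y a = 1 \<or> y a = -1)" using u ab by blast
    moreover have "(x b = 1 \<or> x b = -1) \<and> (y b = 1 \<or> y b = -1)" using u ab by blast
    ultimately show ?thesis using 3 by auto
  qed
qed

lemma key_disj:
  assumes rx: "ip N x x = 2" and rz: "ip N z z = 2" and rw: "ip N w w = 2"
    and xz: "ip N x z = 0" and wx: "ip N w x = -1" and wz: "ip N w z = 0"
  shows "supp N x \<inter> supp N z = {}"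
proof (rule ccontr)
  assume ne: "supp N x \<inter> supp N z \<noteq> {}"
  have "card (supp N x \<inter> supp N z) = 2"
    using ip_cases[OF rx rz] xz ne by auto
  then have e1: "supp N x \<inter> supp N z = supp N x" "supp N x \<inter> supp N z = supp N z"
    using root_card[OF rx] root_card[OF rz]
    by (metis card_subset_eq inf_le1 supp_fin, metis card_subset_eq inf_le2 supp_fin)
  then have "supp N x = supp N z" by simp
  moreover have "card (supp N w \<inter> supp N x) = 1" using ip_cases[OF rw rx] wx by auto
  moreover have "card (supp N w \<inter> supp N z) \<noteq> 1" using ip_cases[OF rw rz] wz by auto
  ultimately show False by simp
qed

definition adjc :: "nat \<Rightarrow> nat \<Rightarrow> bool" where
  "adjc i j \<longleftrightarrow> (i + 1 = j \<and> j \<noteq> 1 \<and> j \<noteq> 3 \<and> j \<noteq> 7) \<or> (j + 1 = i \<and> i \<noteq> 1 \<and> i \<noteq> 3 \<and> i \<noteq> 7)"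

lemma witness: "i < j \<Longrightarrow> j < K \<Longrightarrow> 11 \<le> K \<Longrightarrow> \<not> adjc i j \<Longrightarrow>
  \<exists>w<K. (adjc w j \<and> \<not> adjc w i \<and> w \<noteq> i) \<or> (adjc w i \<and> \<not> adjc w j \<and> w \<noteq> j)"
proof -
  assume ij: "i < j" and jK: "j < K" and K: "11 \<le> K" and na: "\<not> adjc i j"
  consider (A) "j \<noteq> 1 \<and> j \<noteq> 3 \<and> j \<noteq> 7 \<and> \<not> adjc (j-1) i \<and> j-1 \<noteq> i"
    | (B) "j+1 < K \<and> j+1 \<noteq> 1 \<and> j+1 \<noteq> 3 \<and> j+1 \<noteq> 7"
    | (C) "i \<ge> 1 \<and> i \<noteq> 1 \<and> i \<noteq> 3 \<and> i \<noteq> 7"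
    | (D) "\<not> (j \<noteq> 1 \<and> j \<noteq> 3 \<and> j \<noteq> 7 \<and> \<not> adjc (j-1) i \<and> j-1 \<noteq> i)"
          "\<not> (j+1 < K \<and> j+1 \<noteq> 1 \<and> j+1 \<noteq> 3 \<and> j+1 \<noteq> 7)"
          "\<not> (i \<ge> 1 \<and> i \<noteq> 1 \<and> i \<noteq> 3 \<and> i \<noteq> 7)" by blast
  then show ?thesis
  proof cases
    case A then show ?thesis using ij jK by (intro exI[of _ "j-1"]) (auto simp: adjc_def)
  next
    case B then show ?thesis using ij jK by (intro exI[of _ "j+1"]) (auto simp: adjc_def)
  next
    case C then show ?thesis using ij jK by (intro exI[of _ "i-1"]) (auto simp: adjc_def)
  next
    case D
    have "i = 0 \<or> i = 1 \<or> i = 3 \<or> i = 7" using D(3) by linarith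
    moreover have "j + 1 = K \<or> j = 0 \<or> j = 2 \<or> j = 6" using D(2) jK by linarith
    ultimately show ?thesis using D(1) ij K na by (auto simp: adjc_def)
  qed
qed



lemma no_config:
  fixes v :: "nat \<Rightarrow> nat \<Rightarrow> int"
  assumes K: "11 \<le> K"
    and diag: "\<And>i. i < K \<Longrightarrow> ip N (v i) (v i) = 2"
    and off: "\<And>i j. i < K \<Longrightarrow> j < K \<Longrightarrow> i \<noteq> j \<Longrightarrow> ip N (v i) (v j) = (if adjc i j then -1 else 0)"
  shows "K + 4 \<le> N"
proof -
  have adj_sym: "adjc i j = adjc j i" for i j by (auto simp: adjc_def)
  have adj_irr: "\<not> adjc i i" for i by (auto simp: adjc_def)
  have half: "supp N (v i) \<inter> supp N (v j) = {}" if ij: "i < j" "j < K" "\<not> adjc i j" for i j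
  proof -
    obtain w where w: "w < K" "(adjc w j \<and> \<not> adjc w i \<and> w \<noteq> i) \<or> (adjc w i \<and> \<not> adjc w j \<and> w \<noteq> j)"
      using witness[OF ij(1,2) K ij(3)] by blast
    have iK: "i < K" using ij by simp
    from w(2) show ?thesis
    proof
      assume a: "adjc w j \<and> \<not> adjc w i \<and> w \<noteq> i"
      then have "w \<noteq> j" using adj_irr by metis
      have "supp N (v j) \<inter> supp N (v i) = {}"
      proof (rule key_disj[of N "v j" "v i" "v w"])
        show "ip N (v j) (v j) = 2" "ip N (v i) (v i) = 2" "ip N (v w) (v w) = 2"
          using diag ij iK w by auto
        show "ip N (v j) (v i) = 0" using off[of j i] ij iK adj_sym by auto
        show "ip N (v w) (v j) = -1" using off[of w j] a \<open>w \<noteq> j\<close> w ij by auto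
        show "ip N (v w) (v i) = 0" using off[of w i] a w iK by auto
      qed
      then show ?thesis by blast
    next
      assume a: "adjc w i \<and> \<not> adjc w j \<and> w \<noteq> j"
      then have "w \<noteq> i" using adj_irr by metis
      show "supp N (v i) \<inter> supp N (v j) = {}"
      proof (rule key_disj[of N "v i" "v j" "v w"])
        show "ip N (v j) (v j) = 2" "ip N (v i) (v i) = 2" "ip N (v w) (v w) = 2"
          using diag ij iK w by auto
        show "ip N (v i) (v j) = 0" using off[of i j] ij iK by auto
        show "ip N (v w) (v i) = -1" using off[of w i] a \<open>w \<noteq> i\<close> w iK by auto
        show "ip N (v w) (v j) = 0" using off[of w j] a w ij by auto
      qed
    qed
  qed
  have disj: "supp N (v i) \<inter> supp N (v j) = {}" if "i < K" "j < K" "i \<noteq> j" "\<not> adjc i j" for i j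
  proof (cases "i < j")
    case True then show ?thesis using half that by blast
  next
    case False
    then have "j < i" using that by simp
    then show ?thesis using half[of j i] that adj_sym by blast
  qed
  define U where "U n = (\<Union>i<n. supp N (v i))" for n
  have Ufin: "finite (U n)" for n by (simp add: U_def)
  have Usub: "U n \<subseteq> {..<N}" for n using supp_sub by (auto simp: U_def)
  have stepU: "card (U (Suc i)) \<ge> card (U i) + (if i = 0 \<or> i = 1 \<or> i = 3 \<or> i = 7 then 2 else 1)"
    if iK: "i < K" for i
  proof -
    let ?S = "supp N (v i)"
    have US: "U (Suc i) = U i \<union> (?S - U i)" by (auto simp: U_def lessThan_Suc)
    have cU: "card (U (Suc i)) = card (U i) + card (?S - U i)"
      unfolding US by (rule card_Un_disjoint) (auto simp: Ufin)
    have cS: "card ?S = 2" using root_card diag iK by blast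
    have cD: "card (?S - U i) = 2 - card (?S \<inter> U i)"
      using card_Diff_subset_Int[of ?S "U i"] cS by simp
    have sub: "?S \<inter> U i \<subseteq> (if i \<ge> 1 \<and> adjc (i-1) i then ?S \<inter> supp N (v (i-1)) else {})"
    proof
      fix t assume t: "t \<in> ?S \<inter> U i"
      then obtain j where j: "j < i" "t \<in> supp N (v j)" by (auto simp: U_def)
      have "adjc j i"
      proof (rule ccontr)
        assume "\<not> adjc j i"
        then have "supp N (v j) \<inter> ?S = {}" using disj[of j i] j iK by simp
        then show False using t j by blast
      qed
      then have "j = i - 1" "i \<ge> 1" using j by (auto simp: adjc_def)
      then show "t \<in> (if i \<ge> 1 \<and> adjc (i-1) i then ?S \<inter> supp N (v (i-1)) else {})"
        using t j \<open>adjc j i\<close> by auto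
    qed
    show ?thesis
    proof (cases "i \<ge> 1 \<and> adjc (i-1) i")
      case True
      have "ip N (v i) (v (i-1)) = -1" using off[of i "i-1"] iK True adj_sym by auto
      then have "card (?S \<inter> supp N (v (i-1))) = 1"
        using ip_cases[of N "v i" "v (i-1)"] diag iK by fastforce
      then have "card (?S \<inter> U i) \<le> 1" using sub True card_mono[of "?S \<inter> supp N (v (i-1))"] by simp
      moreover have "\<not> (i = 0 \<or> i = 1 \<or> i = 3 \<or> i = 7)" using True by (auto simp: adjc_def)
      ultimately show ?thesis using cU cD by simp
    next
      case False
      then have "?S \<inter> U i = {}" using sub by auto
      moreover have "i = 0 \<or> i = 1 \<or> i = 3 \<or> i = 7" using False by (auto simp: adjc_def)
      ultimately show ?thesis using cU cD by simp
    qed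
  qed
  have U0: "card (U 0) = 0" by (simp add: U_def)
  have U8: "card (U 8) \<ge> 12"
    using U0 stepU[of 0] stepU[of 1] stepU[of 2] stepU[of 3] stepU[of 4] stepU[of 5] stepU[of 6] stepU[of 7] K
    by (simp add: numeral_eq_Suc)
  have "card (U n) \<ge> n + 4" if "8 \<le> n" "n \<le> K" for n
    using that
  proof (induction n rule: dec_induct)
    case base then show ?case using U8 by simp
  next
    case (step n) then show ?case using stepU[of n] by simp
  qed
  then have "card (U K) \<ge> K + 4" using K by simp
  moreover have "card (U K) \<le> N" using card_mono[OF _ Usub[of K]] by simp
  ultimately show ?thesis by simp
qed



lemma neg_form: "(\<Sum>s<N. \<Sum>t<N. a s * (if s = t then -1 else 0) * b t) = - ip N a b"
proof -
  have "(\<Sum>t<N. a s * (if s = t then -1 else 0) * b t) = - (a s * b s)" if "s < N" for s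
  proof -
    have "(\<Sum>t<N. a s * (if s = t then -1 else 0) * b t) = (\<Sum>t<N. if s = t then - (a s * b t) else 0)"
      by (rule sum.cong) auto
    also have "\<dots> = - (a s * b s)" using that by (simp add: sum.delta)
    finally show ?thesis .
  qed
  then have "(\<Sum>s<N. \<Sum>t<N. a s * (if s = t then -1 else 0) * b t) = (\<Sum>s<N. - (a s * b s))"
    by (intro sum.cong) auto
  then show ?thesis by (simp add: ip_def sum_negf)
qed

lemma orth_fst: "fst (X \<oplus>\<^sub>L Y) = fst X + fst Y"
  by (cases X; cases Y) (simp add: orth_sum_def)
lemma orth_snd: "snd (X \<oplus>\<^sub>L Y) i j = (if i < fst X \<and> j < fst X then snd X i j
   else if fst X \<le> i \<and> fst X \<le> j then snd Y (i - fst X) (j - fst X) else 0)"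
  by (cases X; cases Y) (simp add: orth_sum_def)
lemma QX_fst: "fst (QX p q) = length (hj_cf p q)" by (simp add: QX_def Let_def)
lemma QX_snd: "snd (QX p q) i j = (if i = j then - (hj_cf p q ! i) else if i + 1 = j \<or> j + 1 = i then 1 else 0)"
  by (simp add: QX_def Let_def)

lemma small7: "\<forall>i<7. \<forall>j<7. snd (QX 2 1 \<oplus>\<^sub>L QX 3 2 \<oplus>\<^sub>L QX 5 4) i j = (if i = j then -2 else if adjc i j then 1 else 0)"
  by (simp add: orth_fst orth_snd QX_fst QX_snd cf_small adjc_def numeral_eq_Suc All_less_Suc)

lemma L_form:
  fixes K :: nat
  assumes K: "K \<ge> 1"
  defines "p4 \<equiv> 9 * (int K)^2 + 17 * int K + 17" and "q4 \<equiv> 9 * (int K)^2 + 8 * int K + 9"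
  shows "fst (QX 2 1 \<oplus>\<^sub>L QX 3 2 \<oplus>\<^sub>L QX 5 4 \<oplus>\<^sub>L QX p4 q4) = K + 9"
    and "\<And>i j. i < K + 7 \<Longrightarrow> j < K + 7 \<Longrightarrow> snd (QX 2 1 \<oplus>\<^sub>L QX 3 2 \<oplus>\<^sub>L QX 5 4 \<oplus>\<^sub>L QX p4 q4) i j
         = (if i = j then -2 else if adjc i j then 1 else 0)"
proof -
  have cf: "hj_cf p4 q4 = replicate K 2 @ [2 + int K, 9]" unfolding p4_def q4_def using cf_main[OF K] .
  have fX: "fst (QX 2 1 \<oplus>\<^sub>L QX 3 2 \<oplus>\<^sub>L QX 5 4) = 7" by (simp only: orth_fst QX_fst cf_small) simp
  show "fst (QX 2 1 \<oplus>\<^sub>L QX 3 2 \<oplus>\<^sub>L QX 5 4 \<oplus>\<^sub>L QX p4 q4) = K + 9"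
    by (simp only: orth_fst QX_fst cf cf_small) simp
  fix i j assume ij: "i < K + 7" "j < K + 7"
  have nth: "(replicate K 2 @ [2 + int K, 9]) ! m = 2" if "m < K" for m
    using that by (simp add: nth_append)
  consider (a) "i < 7" "j < 7" | (b) "7 \<le> i" "7 \<le> j" | (c) "i < 7" "7 \<le> j" | (d) "7 \<le> i" "j < 7" by linarith
  then show "snd (QX 2 1 \<oplus>\<^sub>L QX 3 2 \<oplus>\<^sub>L QX 5 4 \<oplus>\<^sub>L QX p4 q4) i j
         = (if i = j then -2 else if adjc i j then 1 else 0)"
  proof cases
    case a then show ?thesis using small7 by (simp add: orth_snd fX)
  next
    case b
    have "snd (QX 2 1 \<oplus>\<^sub>L QX 3 2 \<oplus>\<^sub>L QX 5 4 \<oplus>\<^sub>L QX p4 q4) i j = snd (QX p4 q4) (i - 7) (j - 7)"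
      using b by (simp add: orth_snd fX)
    also have "\<dots> = (if i = j then -2 else if adjc i j then 1 else 0)"
      unfolding QX_snd cf using b ij nth[of "i - 7"] by (auto simp: adjc_def)
    finally show ?thesis .
  next
    case c then show ?thesis by (simp add: orth_snd fX adjc_def)
  next
    case d then show ?thesis by (simp add: orth_snd fX adjc_def)
  qed
qed



theorem mainTheorem3:
  fixes k :: int
  assumes "k \<ge> 12" and "k mod 3 \<noteq> 2"
  defines "p4 \<equiv> 9 * k^2 + 17 * k + 17"
      and "q4 \<equiv> 9 * k^2 + 8 * k + 9"
  shows "hj_val (replicate (nat k) 2 @ [2 + k, 9]) = of_int p4 / of_int q4
    \<and> inv_mod p4 q4 = k^2 + 2 * k + 2
    \<and> gcd p4 30 = 1
    \<and> K2 [(2, 1), (3, 2), (5, 4), (p4, q4)] = (3 * k^2 + 139 * k + 154) / (15 * (9 * k^2 + 17 * k + 17))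
    \<and> 0 < K2 [(2, 1), (3, 2), (5, 4), (p4, q4)] \<and> K2 [(2, 1), (3, 2), (5, 4), (p4, q4)] < 3 * e_orb [(2, 1), (3, 2), (5, 4), (p4, q4)]
    \<and> 3 * e_orb [(2, 1), (3, 2), (5, 4), (p4, q4)] = 1 / 10 + 3 / of_int p4
    \<and> \<not> lattice_embeds (QX 2 1 \<oplus>\<^sub>L QX 3 2 \<oplus>\<^sub>L QX 5 4 \<oplus>\<^sub>L QX p4 q4) (neg_std (nat (k + 10)))"
proof -
  define K where "K = nat k"
  have kK: "k = int K" using assms(1) by (simp add: K_def)
  have K1: "K \<ge> 1" "K \<ge> 12" using assms(1) kK by auto
  have P1: "hj_val (replicate (nat k) 2 @ [2 + k, 9]) = of_int p4 / of_int q4"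
    using val_main[OF K1(1)] unfolding p4_def q4_def K_def[symmetric] kK by simp
  have P2: "inv_mod p4 q4 = k^2 + 2 * k + 2" unfolding p4_def q4_def using inv_main assms(1) by simp
  have P3: "gcd p4 30 = 1" unfolding p4_def using gcd30 assms(2) by simp
  have P4: "K2 [(2, 1), (3, 2), (5, 4), (p4, q4)] = (3 * k^2 + 139 * k + 154) / (15 * (9 * k^2 + 17 * k + 17))"
    by (rule K2_main[OF K1(1) kK]) (simp_all add: p4_def q4_def)
  have ppos: "p4 > 0" unfolding p4_def using assms(1) by (simp add: add_pos_nonneg)
  have P6: "3 * e_orb [(2, 1), (3, 2), (5, 4), (p4, q4)] = 1 / 10 + 3 / of_int p4"
    by (rule e_orb_main[OF ppos])
  have P5: "0 < K2 [(2, 1), (3, 2), (5, 4), (p4, q4)] \<and> K2 [(2, 1), (3, 2), (5, 4), (p4, q4)] < 3 * e_orb [(2, 1), (3, 2), (5, 4), (p4, q4)]"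
    unfolding P4 P6 using ineq_main[OF assms(1)] by (simp add: p4_def)
  have P7: "\<not> lattice_embeds (QX 2 1 \<oplus>\<^sub>L QX 3 2 \<oplus>\<^sub>L QX 5 4 \<oplus>\<^sub>L QX p4 q4) (neg_std (nat (k + 10)))"
  proof
    let ?L = "QX 2 1 \<oplus>\<^sub>L QX 3 2 \<oplus>\<^sub>L QX 5 4 \<oplus>\<^sub>L QX p4 q4"
    have p4K: "p4 = 9 * (int K)^2 + 17 * int K + 17" "q4 = 9 * (int K)^2 + 8 * int K + 9"
      unfolding p4_def q4_def kK by simp_all
    have Lf: "fst ?L = K + 9" unfolding p4K by (rule L_form(1)[OF K1(1)])
    have Ls: "\<And>i j. i < K + 7 \<Longrightarrow> j < K + 7 \<Longrightarrow> snd ?L i j = (if i = j then -2 else if adjc i j then 1 else 0)"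
      unfolding p4K by (rule L_form(2)[OF K1(1)])
    have Leq: "?L = (K + 9, snd ?L)" using Lf by (metis prod.collapse)
    have N: "nat (k + 10) = K + 10" using kK by simp
    assume "lattice_embeds ?L (neg_std (nat (k + 10)))"
    then obtain E :: "nat \<Rightarrow> nat \<Rightarrow> int" where
      E: "\<forall>i<K+9. \<forall>j<K+9. (\<Sum>s<K+10. \<Sum>t<K+10. E i s * (if s = t then -1 else 0) * E j t) = snd ?L i j"
      unfolding N by (subst (asm) Leq) (auto simp: lattice_embeds_def neg_std_def)
    have E2: "ip (K+10) (E i) (E j) = - snd ?L i j" if "i < K+9" "j < K+9" for i j
      using E that neg_form[where N="K+10" and a="E i" and b="E j"] by simp
    have "K + 7 + 4 \<le> K + 10"
    proof (rule no_config[of "K+7" "K+10" E])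
      show "11 \<le> K + 7" using K1 by simp
      show "ip (K + 10) (E i) (E i) = 2" if "i < K + 7" for i using E2[of i i] Ls[of i i] that by simp
      show "ip (K + 10) (E i) (E j) = (if adjc i j then -1 else 0)" if "i < K + 7" "j < K + 7" "i \<noteq> j" for i j
        using E2[of i j] Ls[of i j] that by simp
    qed
    then show False by simp
  qed
  show ?thesis using P1 P2 P3 P4 P5 P6 P7 by blast
qed


end
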